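(* Let $f_{\bm{\theta}}:\mathbb{R}^d\to\mathbb{R}$ be a neural network with parameters $\bm{\theta}\in\mathbb{R}^n$, let $\bm{\theta}_0$ be fixed, and let $\bm{\Theta}(\bm{x},\bm{x}')=\langle\nabla_{\bm{\theta}}f_{\bm{\theta}_0}(\bm{x}),\nabla_{\bm{\theta}}f_{\bm{\theta}_0}(\bm{x}')\rangle$ be its empirical neural tangent kernel at $\bm{\theta}_0$. Let $\bm{u}\in\mathbb{S}^{d-1}$ be a unit vector parameterizing the linear predictor $g_{\bm{u}}(\bm{x})=\bm{u}^\top\bm{x}$, and let $\bm{x}\sim\mathcal{N}(\bm{0},\bm{I})$. Then the alignment of $g_{\bm{u}}$ with $\bm{\Theta}$, defined as $\alpha(g_{\bm{u}})=\mathbb{E}_{\bm{x},\bm{x}'}\left[g_{\bm{u}}(\bm{x})\bm{\Theta}(\bm{x},\bm{x}')g_{\bm{u}}(\bm{x}')\right]$ with $\bm{x},\bm{x}'$ independent $\mathcal{N}(\bm{0},\bm{I})$, is given by $$\alpha(g_{\bm{u}})=\left\|\mathbb{E}_{\bm{x}}\left[\nabla^2_{\bm{x},\bm{\theta}}f_{\bm{\theta}_0}(\bm{x})\right]\bm{u}\right\|_2^2,$$ where $\nabla^2_{\bm{x},\bm{\theta}}f_{\bm{\theta}_0}(\bm{x})\in\mathbb{R}^{n\times d}$ denotes the matrix of mixed second derivatives of $f_{\bm{\theta}}(\bm{x})$ with respect to the weights $\bm{\theta}$ and the input $\bm{x}$, evaluated at $\bm{\theta}_0$.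
   Context: $\nabla_{\bm{\theta}}f_{\bm{\theta}_0}(\bm{x})\in\mathbb{R}^n$ is the gradient of the network output with respect to its parameters at $\bm{\theta}_0$; the network is implicitly assumed regular enough that these derivatives and expectations exist. *)

theory Defs
  imports "HOL-Probability.Probability"
begin

definition std_gauss :: "(real ^ 'd::finite) measure" where
  "std_gauss = density lborel (\<lambda>x. \<Prod>j\<in>UNIV. ennreal (std_normal_density (x $ j)))"

text \<open>Empirical NTK at theta0, built from the parameter gradient G x.\<close>
definition ntk :: "(real ^ 'd::finite \<Rightarrow> real ^ 'n::finite) \<Rightarrow> real ^ 'd \<Rightarrow> real ^ 'd \<Rightarrow> real" where
  "ntk G x x' = G x \<bullet> G x'"

definition alignment :: "(real ^ 'd::finite \<Rightarrow> real ^ 'd \<Rightarrow> real) \<Rightarrow> (real ^ 'd \<Rightarrow> real) \<Rightarrow> real" where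
  "alignment K g = (\<integral>p. g (fst p) * K (fst p) (snd p) * g (snd p) \<partial>(std_gauss \<Otimes>\<^sub>M std_gauss))"

end

theory Submission
  imports Defs "HOL-Real_Asymp.Real_Asymp"
begin

lemma ndens_eq: "normal_density \<mu> 1 = (\<lambda>t. exp (-((t-\<mu>)^2)/2) / sqrt (2*pi))"
  by (auto simp: normal_density_def fun_eq_iff)

lemma ndens_deriv:
  "((normal_density \<mu> 1) has_real_derivative (-(t-\<mu>) * normal_density \<mu> 1 t)) (at t)"
proof -
  have "((\<lambda>t. exp (-((t-\<mu>)^2)/2)) has_real_derivative exp (-((t-\<mu>)^2)/2) * (-(t-\<mu>))) (at t)"
    by (auto intro!: derivative_eq_intros simp: field_simps)
  from DERIV_cdivide[OF this, of "sqrt (2*pi)"] show ?thesis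
    unfolding ndens_eq by (simp add: algebra_simps)
qed

lemma ndens_lim: "((normal_density \<mu> 1) \<longlongrightarrow> 0) at_top"
  unfolding ndens_eq by real_asymp

lemma ndens_pos: "0 < normal_density \<mu> 1 t"
  by (simp add: normal_density_pos)

lemma tail_nn:
  "(\<integral>\<^sup>+s. ennreal ((s - \<mu>) * normal_density \<mu> 1 s) * indicator {t..} s \<partial>lborel) = normal_density \<mu> 1 t"
  if "\<mu> \<le> t"
proof -
  have "(\<integral>\<^sup>+s. ennreal ((s - \<mu>) * normal_density \<mu> 1 s) * indicator {t..} s \<partial>lborel)
     = 0 - (- normal_density \<mu> 1 t)"
  proof (rule nn_integral_FTC_atLeast[where F="\<lambda>s. - normal_density \<mu> 1 s"])
    show "(\<lambda>s. (s - \<mu>) * normal_density \<mu> 1 s) \<in> borel_measurable borel" by measurable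
    show "((\<lambda>s. - normal_density \<mu> 1 s) has_real_derivative (x - \<mu>) * normal_density \<mu> 1 x) (at x)" for x
      using DERIV_minus[OF ndens_deriv[of \<mu> x]] by (simp add: algebra_simps)
    show "0 \<le> (x - \<mu>) * normal_density \<mu> 1 x" if "t \<le> x" for x
      using that \<open>\<mu> \<le> t\<close> by simp
    show "((\<lambda>s. - normal_density \<mu> 1 s) \<longlongrightarrow> 0) at_top"
      using tendsto_minus[OF ndens_lim[of \<mu>]] by simp
  qed
  then show ?thesis by simp
qed

lemma tail_bochner:
  assumes "\<mu> \<le> t"
  shows "has_bochner_integral lborel (\<lambda>s. if t \<le> s then (s - \<mu>) * normal_density \<mu> 1 s else 0) (normal_density \<mu> 1 t)"
proof (rule has_bochner_integral_nn_integral)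
  show "(\<lambda>s. if t \<le> s then (s - \<mu>) * normal_density \<mu> 1 s else 0) \<in> borel_measurable lborel"
    by measurable
  show "AE x in lborel. 0 \<le> (if t \<le> x then (x - \<mu>) * normal_density \<mu> 1 x else 0)"
    using assms by auto
  show "0 \<le> normal_density \<mu> 1 t" by simp
  have "(\<integral>\<^sup>+ x. ennreal (if t \<le> x then (x - \<mu>) * normal_density \<mu> 1 x else 0) \<partial>lborel)
     = (\<integral>\<^sup>+s. ennreal ((s - \<mu>) * normal_density \<mu> 1 s) * indicator {t..} s \<partial>lborel)"
    by (intro nn_integral_cong) (auto simp: indicator_def)
  also have "\<dots> = ennreal (normal_density \<mu> 1 t)" using tail_nn[OF assms] .
  finally show "(\<integral>\<^sup>+ x. ennreal (if t \<le> x then (x - \<mu>) * normal_density \<mu> 1 x else 0) \<partial>lborel) = ennreal (normal_density \<mu> 1 t)" .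
qed

lemma ftc_leb:
  fixes G G' :: "real \<Rightarrow> real"
  assumes D: "\<And>t. (G has_real_derivative G' t) (at t)" and ab: "a \<le> b"
    and I: "integrable lborel (\<lambda>t. if a \<le> t \<and> t \<le> b then G' t else 0)"
  shows "(\<integral>t. (if a \<le> t \<and> t \<le> b then G' t else 0) \<partial>lborel) = G b - G a"
proof -
  have eq: "(\<lambda>t. indicator {a..b} t *\<^sub>R G' t) = (\<lambda>t. if a \<le> t \<and> t \<le> b then G' t else 0)"
    by (auto simp: indicator_def)
  have si: "set_integrable lborel {a..b} G'"
    unfolding set_integrable_def eq using I .
  have "(G' has_integral (G b - G a)) {a..b}"
    apply (rule fundamental_theorem_of_calculus[OF ab])
    using D by (auto simp: has_real_derivative_iff_has_vector_derivative[symmetric] intro: DERIV_subset)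
  then have "integral {a..b} G' = G b - G a" by (rule integral_unique)
  moreover have "(LINT t : {a..b} | lborel. G' t) = integral {a..b} G'"
    by (rule set_borel_integral_eq_integral(2)[OF si])
  ultimately show ?thesis unfolding set_lebesgue_integral_def eq by simp
qed

lemma stein_right:
  fixes G G' :: "real \<Rightarrow> real"
  assumes D: "\<And>t. (G has_real_derivative G' t) (at t)"
    and Gm[measurable]: "G' \<in> borel_measurable borel"
    and I: "integrable lborel (\<lambda>t. normal_density \<mu> 1 t * G' t)"
  shows "integrable lborel (\<lambda>s. if \<mu> \<le> s then (s-\<mu>) * normal_density \<mu> 1 s * (G s - G \<mu>) else 0)"
    and "(\<integral>t. (if \<mu> \<le> t then normal_density \<mu> 1 t * G' t else 0) \<partial>lborel)
         = (\<integral>s. (if \<mu> \<le> s then (s-\<mu>) * normal_density \<mu> 1 s * (G s - G \<mu>) else 0) \<partial>lborel)"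
proof -
  have GmC[measurable]: "G \<in> borel_measurable borel"
    by (rule borel_measurable_continuous_onI) (use D DERIV_isCont continuous_at_imp_continuous_on in blast)
  define p where "p = normal_density \<mu> 1"
  have pm[measurable]: "p \<in> borel_measurable borel" unfolding p_def by measurable
  define c where "c t = (if \<mu> \<le> t then G' t else 0)" for t
  define k where "k t s = (if \<mu> \<le> t \<and> t \<le> s then (s - \<mu>) * p s else 0)" for t s
  define K where "K = (\<lambda>(t,s). c t * k t s)"
  have cm[measurable]: "c \<in> borel_measurable borel" unfolding c_def by measurable
  have km[measurable]: "(\<lambda>(t,s). k t s) \<in> borel_measurable (lborel \<Otimes>\<^sub>M lborel)"
    unfolding k_def by measurable
  have Km[measurable]: "K \<in> borel_measurable (lborel \<Otimes>\<^sub>M lborel)"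
    unfolding K_def by measurable
  have k_nn: "0 \<le> k t s" for t s unfolding k_def p_def by auto
  have k_int: "has_bochner_integral lborel (k t) (if \<mu> \<le> t then p t else 0)" for t
  proof (cases "\<mu> \<le> t")
    case True
    then show ?thesis using tail_bochner[OF True] unfolding k_def p_def by simp
  next
    case False
    then show ?thesis unfolding k_def by (simp add: has_bochner_integral_zero)
  qed
  have sec: "has_bochner_integral lborel (\<lambda>s. K (t,s)) (c t * (if \<mu> \<le> t then p t else 0))" for t
    unfolding K_def using has_bochner_integral_mult_right[OF k_int[of t], of "c t"] by simp
  have secn: "has_bochner_integral lborel (\<lambda>s. norm (K (t,s))) (\<bar>c t\<bar> * (if \<mu> \<le> t then p t else 0))" for t
  proof -
    have "(\<lambda>s. norm (K (t,s))) = (\<lambda>s. \<bar>c t\<bar> * k t s)"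
      unfolding K_def using k_nn by (auto simp: abs_mult)
    then show ?thesis using has_bochner_integral_mult_right[OF k_int[of t], of "\<bar>c t\<bar>"] by simp
  qed
  have cI: "integrable lborel (\<lambda>t. c t * (if \<mu> \<le> t then p t else 0))"
  proof -
    have "(\<lambda>t. c t * (if \<mu> \<le> t then p t else 0)) = (\<lambda>t. indicator {\<mu>..} t * (p t * G' t))"
      unfolding c_def by (auto simp: indicator_def fun_eq_iff)
    then show ?thesis using integrable_mult_indicator[OF _ I, of "{\<mu>..}"] unfolding p_def
      by simp
  qed
  have KI: "integrable (lborel \<Otimes>\<^sub>M lborel) K"
  proof (rule lborel_pair.Fubini_integrable)
    show "integrable lborel (\<lambda>x. \<integral>y. norm (K (x, y)) \<partial>lborel)"
    proof -
      have "(\<lambda>x. \<integral>y. norm (K (x, y)) \<partial>lborel) = (\<lambda>t. \<bar>c t * (if \<mu> \<le> t then p t else 0)\<bar>)"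
        using secn by (auto simp: has_bochner_integral_iff abs_mult p_def fun_eq_iff)
      then show ?thesis using cI by simp
    qed
    show "AE x in lborel. integrable lborel (\<lambda>y. K (x, y))"
      using sec by (auto simp: has_bochner_integral_iff)
  qed simp
  have KI': "integrable (lborel \<Otimes>\<^sub>M lborel) (case_prod (\<lambda>t s. c t * k t s))"
    using KI unfolding K_def .
  have lhs: "(\<integral>t. (if \<mu> \<le> t then p t * G' t else 0) \<partial>lborel) = integral\<^sup>L (lborel \<Otimes>\<^sub>M lborel) K"
  proof -
    have "(\<integral>t. (if \<mu> \<le> t then p t * G' t else 0) \<partial>lborel) = (\<integral>t. (\<integral>s. K (t,s) \<partial>lborel) \<partial>lborel)"
      apply (rule Bochner_Integration.integral_cong[OF refl])
      using sec by (auto simp: has_bochner_integral_iff c_def)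
    also have "\<dots> = integral\<^sup>L (lborel \<Otimes>\<^sub>M lborel) K" using lborel_pair.integral_fst'[OF KI] .
    finally show ?thesis .
  qed
  have ae: "AE s in lborel. (\<integral>t. c t * k t s \<partial>lborel) = (if \<mu> \<le> s then (s-\<mu>) * p s * (G s - G \<mu>) else 0)"
  proof -
   have "integrable lborel (\<lambda>t. c t * k t s) \<Longrightarrow> (\<integral>t. c t * k t s \<partial>lborel) = (if \<mu> \<le> s then (s-\<mu>) * p s * (G s - G \<mu>) else 0)" for s
   proof -
    assume elim: "integrable lborel (\<lambda>t. c t * k t s)"
    show ?thesis
    proof (cases "\<mu> < s")
      case True
      have eq: "(\<lambda>t. c t * k t s) = (\<lambda>t. ((s-\<mu>)*p s) * (if \<mu> \<le> t \<and> t \<le> s then G' t else 0))"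
        by (auto simp: c_def k_def fun_eq_iff)
      have pos: "(s-\<mu>)*p s \<noteq> 0" using True ndens_pos[of \<mu> s] unfolding p_def by simp
      from elim have "integrable lborel (\<lambda>t. if \<mu> \<le> t \<and> t \<le> s then G' t else 0)"
        unfolding eq using pos by simp
      then have "(\<integral>t. (if \<mu> \<le> t \<and> t \<le> s then G' t else 0) \<partial>lborel) = G s - G \<mu>"
        by (intro ftc_leb[OF D]) (use True in simp_all)
      then show ?thesis unfolding eq using True by simp
    next
      case False
      then have "(\<lambda>t. c t * k t s) = (\<lambda>t. 0)" by (auto simp: k_def fun_eq_iff)
      then show ?thesis using False by simp
    qed
   qed
   then show ?thesis using lborel_pair.AE_integrable_snd[OF KI'] by (auto elim: AE_mp)
  qed
  have m1: "(\<lambda>s. if \<mu> \<le> s then (s-\<mu>) * p s * (G s - G \<mu>) else 0) \<in> borel_measurable lborel"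
    by measurable
  have i1: "integrable lborel (\<lambda>s. if \<mu> \<le> s then (s-\<mu>) * p s * (G s - G \<mu>) else 0)"
    by (rule integrable_cong_AE_imp[OF lborel_pair.integrable_snd[OF KI'] m1 ae])
  then show "integrable lborel (\<lambda>s. if \<mu> \<le> s then (s-\<mu>) * normal_density \<mu> 1 s * (G s - G \<mu>) else 0)"
    unfolding p_def .
  have "(\<integral>s. (if \<mu> \<le> s then (s-\<mu>) * p s * (G s - G \<mu>) else 0) \<partial>lborel) = (\<integral>s. (\<integral>t. c t * k t s \<partial>lborel) \<partial>lborel)"
    by (rule integral_cong_AE[OF m1 _ ae[THEN AE_mp, OF AE_I2, OF impI, OF sym]]) (use KI' in measurable)
  also have "\<dots> = integral\<^sup>L (lborel \<Otimes>\<^sub>M lborel) K"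
    using lborel_pair.integral_snd[OF KI'] unfolding K_def .
  finally show "(\<integral>t. (if \<mu> \<le> t then normal_density \<mu> 1 t * G' t else 0) \<partial>lborel)
         = (\<integral>s. (if \<mu> \<le> s then (s-\<mu>) * normal_density \<mu> 1 s * (G s - G \<mu>) else 0) \<partial>lborel)"
    using lhs unfolding p_def by simp
qed

lemma reflect_integral:
  fixes f :: "real \<Rightarrow> real"
  shows "(\<integral>x. f x \<partial>lborel) = (\<integral>x. f (- x) \<partial>lborel)"
  using lborel_integral_real_affine[of "-1" f 0] by simp

lemma reflect_integrable:
  fixes f :: "real \<Rightarrow> real"
  shows "integrable lborel (\<lambda>x. f (- x)) \<longleftrightarrow> integrable lborel f"
  using lborel_integrable_real_affine_iff[of "-1" f 0] by simp

lemma ndens_mirror: "normal_density (-\<mu>) 1 (-t) = normal_density \<mu> 1 t"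
  by (simp add: normal_density_def power2_eq_square algebra_simps)

lemma ndens_mirror2: "normal_density \<mu> 1 (-t) = normal_density (-\<mu>) 1 t"
  using ndens_mirror[of "-\<mu>" t] by simp

lemma stein_left:
  fixes G G' :: "real \<Rightarrow> real"
  assumes D: "\<And>t. (G has_real_derivative G' t) (at t)"
    and Gm[measurable]: "G' \<in> borel_measurable borel"
    and I: "integrable lborel (\<lambda>t. normal_density \<mu> 1 t * G' t)"
  shows "integrable lborel (\<lambda>s. if s \<le> \<mu> then (s-\<mu>) * normal_density \<mu> 1 s * (G s - G \<mu>) else 0)"
    and "(\<integral>t. (if t \<le> \<mu> then normal_density \<mu> 1 t * G' t else 0) \<partial>lborel)
         = (\<integral>s. (if s \<le> \<mu> then (s-\<mu>) * normal_density \<mu> 1 s * (G s - G \<mu>) else 0) \<partial>lborel)"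
proof -
  have D': "((\<lambda>t. - G (- t)) has_real_derivative G' (- t)) (at t)" for t
    using DERIV_minus[OF iffD1[OF DERIV_mirror D[of "-t"]]] by simp
  have Gm': "(\<lambda>t. G' (- t)) \<in> borel_measurable borel" by measurable
  have I': "integrable lborel (\<lambda>t. normal_density (-\<mu>) 1 t * G' (- t))"
  proof -
    have "integrable lborel (\<lambda>t. normal_density \<mu> 1 (-t) * G' (- t))"
      using I reflect_integrable[of "\<lambda>t. normal_density \<mu> 1 t * G' t"] by simp
    moreover have "normal_density \<mu> 1 (-t) = normal_density (-\<mu>) 1 t" for t
      using ndens_mirror[of "-\<mu>" t] by simp
    ultimately show ?thesis by simp
  qed
  note R = stein_right[OF D' Gm' I']
  define F where "F = (\<lambda>s. if s \<le> \<mu> then (s-\<mu>) * normal_density \<mu> 1 s * (G s - G \<mu>) else 0)"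
  define E where "E = (\<lambda>t. if t \<le> \<mu> then normal_density \<mu> 1 t * G' t else 0)"
  have eq1: "(\<lambda>s. if - \<mu> \<le> s then (s - (- \<mu>)) * normal_density (- \<mu>) 1 s * (- G (- s) - (- G (- (- \<mu>)))) else 0)
     = (\<lambda>s. F (- s))"
    by (auto simp: F_def fun_eq_iff ndens_mirror2 algebra_simps)
  have eq2: "(\<lambda>s. if - \<mu> \<le> s then normal_density (- \<mu>) 1 s * G' (- s) else 0)
     = (\<lambda>s. E (- s))"
    by (auto simp: E_def fun_eq_iff ndens_mirror2 algebra_simps)
  have "integrable lborel F"
    using R(1) unfolding eq1 reflect_integrable .
  then show "integrable lborel (\<lambda>s. if s \<le> \<mu> then (s-\<mu>) * normal_density \<mu> 1 s * (G s - G \<mu>) else 0)"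
    unfolding F_def .
  have "integral\<^sup>L lborel E = integral\<^sup>L lborel F"
    using R(2) unfolding eq1 eq2 reflect_integral[of E] reflect_integral[of F] .
  then show "(\<integral>t. (if t \<le> \<mu> then normal_density \<mu> 1 t * G' t else 0) \<partial>lborel)
         = (\<integral>s. (if s \<le> \<mu> then (s-\<mu>) * normal_density \<mu> 1 s * (G s - G \<mu>) else 0) \<partial>lborel)"
    unfolding E_def F_def .
qed

lemma stein1d:
  fixes G G' :: "real \<Rightarrow> real"
  assumes D: "\<And>t. (G has_real_derivative G' t) (at t)"
    and Gm[measurable]: "G' \<in> borel_measurable borel"
    and I: "integrable lborel (\<lambda>t. normal_density \<mu> 1 t * G' t)"
  shows "integrable lborel (\<lambda>t. (t - \<mu>) * normal_density \<mu> 1 t * G t)"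
    and "(\<integral>t. (t - \<mu>) * normal_density \<mu> 1 t * G t \<partial>lborel) = (\<integral>t. normal_density \<mu> 1 t * G' t \<partial>lborel)"
proof -
  note R = stein_right[OF D Gm I] and L = stein_left[OF D Gm I]
  define r where "r = (\<lambda>s. if \<mu> \<le> s then (s-\<mu>) * normal_density \<mu> 1 s * (G s - G \<mu>) else 0)"
  define l where "l = (\<lambda>s. if s \<le> \<mu> then (s-\<mu>) * normal_density \<mu> 1 s * (G s - G \<mu>) else 0)"
  define m where "m = (\<lambda>s. (s-\<mu>) * normal_density \<mu> 1 s * G \<mu>)"
  have mi: "has_bochner_integral lborel m 0"
    using has_bochner_integral_mult_left[OF normal_moment_odd[where \<mu>=\<mu> and \<sigma>=1 and k=0], of "G \<mu>"]
    unfolding m_def by (simp add: algebra_simps)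
  have split: "(\<lambda>t. (t - \<mu>) * normal_density \<mu> 1 t * G t) = (\<lambda>t. (r t + l t) + m t)"
    unfolding r_def l_def m_def by (auto simp: fun_eq_iff algebra_simps)
  have ri: "integrable lborel r" using R(1) unfolding r_def .
  have li: "integrable lborel l" using L(1) unfolding l_def .
  show "integrable lborel (\<lambda>t. (t - \<mu>) * normal_density \<mu> 1 t * G t)"
    unfolding split using ri li mi by (auto simp: has_bochner_integral_iff)
  have "(\<integral>t. (t - \<mu>) * normal_density \<mu> 1 t * G t \<partial>lborel) = integral\<^sup>L lborel r + integral\<^sup>L lborel l"
    unfolding split using ri li mi by (simp add: has_bochner_integral_iff)
  also have "\<dots> = (\<integral>t. (if \<mu> \<le> t then normal_density \<mu> 1 t * G' t else 0) \<partial>lborel)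
      + (\<integral>t. (if t \<le> \<mu> then normal_density \<mu> 1 t * G' t else 0) \<partial>lborel)"
    using R(2) L(2) unfolding r_def l_def by simp
  also have "(\<integral>t. (if \<mu> \<le> t then normal_density \<mu> 1 t * G' t else 0) \<partial>lborel)
      + (\<integral>t. (if t \<le> \<mu> then normal_density \<mu> 1 t * G' t else 0) \<partial>lborel)
     = (\<integral>t. (if \<mu> \<le> t then normal_density \<mu> 1 t * G' t else 0) \<partial>lborel)
      + (\<integral>t. (if t < \<mu> then normal_density \<mu> 1 t * G' t else 0) \<partial>lborel)"
  proof -
    have "AE t in lborel. (if t \<le> \<mu> then normal_density \<mu> 1 t * G' t else 0) = (if t < \<mu> then normal_density \<mu> 1 t * G' t else 0)"
      using AE_lborel_singleton[of \<mu>] by eventually_elim auto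
    then have "(\<integral>t. (if t \<le> \<mu> then normal_density \<mu> 1 t * G' t else 0) \<partial>lborel)
     = (\<integral>t. (if t < \<mu> then normal_density \<mu> 1 t * G' t else 0) \<partial>lborel)"
      by (intro integral_cong_AE) measurable
    then show ?thesis by simp
  qed
  also have "\<dots> = (\<integral>t. (if \<mu> \<le> t then normal_density \<mu> 1 t * G' t else 0) + (if t < \<mu> then normal_density \<mu> 1 t * G' t else 0) \<partial>lborel)"
  proof (rule Bochner_Integration.integral_add[symmetric])
    show "integrable lborel (\<lambda>t. if \<mu> \<le> t then normal_density \<mu> 1 t * G' t else 0)"
      by (rule Bochner_Integration.integrable_cong[OF refl, THEN iffD1, OF _ integrable_mult_indicator[OF _ I, of "{\<mu>..}"]]) (auto simp: indicator_def)
    show "integrable lborel (\<lambda>t. if t < \<mu> then normal_density \<mu> 1 t * G' t else 0)"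
      by (rule Bochner_Integration.integrable_cong[OF refl, THEN iffD1, OF _ integrable_mult_indicator[OF _ I, of "{..<\<mu>}"]]) (auto simp: indicator_def)
  qed
  also have "\<dots> = (\<integral>t. normal_density \<mu> 1 t * G' t \<partial>lborel)"
    by (rule Bochner_Integration.integral_cong[OF refl]) simp
  finally show "(\<integral>t. (t - \<mu>) * normal_density \<mu> 1 t * G t \<partial>lborel) = (\<integral>t. normal_density \<mu> 1 t * G' t \<partial>lborel)" .
qed

lemma transl_nn:
  fixes g :: "'a::euclidean_space \<Rightarrow> ennreal"
  assumes [measurable]: "g \<in> borel_measurable borel"
  shows "(\<integral>\<^sup>+y. g (c + y) \<partial>lborel) = integral\<^sup>N lborel g"
proof -
  have "integral\<^sup>N lborel g = integral\<^sup>N (distr lborel borel ((+) c)) g"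
    by (simp add: lborel_distr_plus)
  also have "\<dots> = (\<integral>\<^sup>+y. g (c + y) \<partial>lborel)"
    by (rule nn_integral_distr) auto
  finally show ?thesis ..
qed

lemma transl_int:
  fixes g :: "'a::euclidean_space \<Rightarrow> real"
  assumes [measurable]: "g \<in> borel_measurable borel"
  shows "(\<integral>y. g (c + y) \<partial>lborel) = integral\<^sup>L lborel g"
proof -
  have "integral\<^sup>L lborel g = integral\<^sup>L (distr lborel borel ((+) c)) g"
    by (simp add: lborel_distr_plus)
  also have "\<dots> = (\<integral>y. g (c + y) \<partial>lborel)"
    by (rule integral_distr) auto
  finally show ?thesis ..
qed

lemma snd_nd_shift: "std_normal_density (c - s) = normal_density c 1 s"
  by (simp add: normal_density_def power2_eq_square algebra_simps)

lemma line_avg: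
  fixes f :: "'a::euclidean_space \<Rightarrow> real" and u :: 'a
  assumes fi: "integrable lborel f" and u: "norm u = 1"
  shows "AE y in lborel. integrable lborel (\<lambda>s. f (y + s *\<^sub>R u))"
    and "(\<integral>y. f y \<partial>lborel) = (\<integral>y. std_normal_density (u \<bullet> y) * (\<integral>s. f (y + s *\<^sub>R u) \<partial>lborel) \<partial>lborel)"
proof -
  have fm[measurable]: "f \<in> borel_measurable borel"
    using borel_measurable_integrable[OF fi] by simp
  have uu: "u \<bullet> u = 1" using u by (simp add: norm_eq_sqrt_inner)
  define \<rho> where "\<rho> = std_normal_density"
  have \<rho>m[measurable]: "\<rho> \<in> borel_measurable borel" unfolding \<rho>_def by measurable
  have \<rho>pos: "0 < \<rho> x" for x unfolding \<rho>_def by (simp add: normal_density_pos)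
  define \<Psi> where "\<Psi> = (\<lambda>(z::'a,s::real). \<rho> (u \<bullet> z - s) * f z)"
  define \<Phi> where "\<Phi> = (\<lambda>(y::'a,s::real). \<rho> (u \<bullet> y) * f (y + s *\<^sub>R u))"
  have \<Psi>m[measurable]: "\<Psi> \<in> borel_measurable (lborel \<Otimes>\<^sub>M lborel)" unfolding \<Psi>_def by measurable
  have \<Phi>m[measurable]: "\<Phi> \<in> borel_measurable (lborel \<Otimes>\<^sub>M lborel)" unfolding \<Phi>_def by measurable
  have \<rho>int: "has_bochner_integral lborel (\<lambda>s. \<rho> (c - s)) 1" for c
  proof -
    have "has_bochner_integral lborel (normal_density c 1) 1"
      using integrable_normal_density[of c 1] integral_normal_density[of c 1]
      by (simp add: has_bochner_integral_iff)
    then show ?thesis unfolding \<rho>_def snd_nd_shift .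
  qed
  have \<Psi>sec: "has_bochner_integral lborel (\<lambda>s. \<Psi> (z,s)) (f z)" for z
    unfolding \<Psi>_def using has_bochner_integral_mult_left[OF \<rho>int[of "u \<bullet> z"], of "f z"] by simp
  have \<Psi>secn: "has_bochner_integral lborel (\<lambda>s. norm (\<Psi> (z,s))) (norm (f z))" for z
  proof -
    have "(\<lambda>s. norm (\<Psi> (z,s))) = (\<lambda>s. \<rho> (u \<bullet> z - s) * norm (f z))"
      unfolding \<Psi>_def using \<rho>pos by (auto simp: abs_mult intro!: ext) (metis abs_of_pos)
    then show ?thesis using has_bochner_integral_mult_left[OF \<rho>int[of "u \<bullet> z"], of "norm (f z)"] by simp
  qed
  have \<Psi>I: "integrable (lborel \<Otimes>\<^sub>M lborel) \<Psi>"
  proof (rule lborel_pair.Fubini_integrable[OF \<Psi>m])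
    show "integrable lborel (\<lambda>x. \<integral>y. norm (\<Psi> (x, y)) \<partial>lborel)"
      using \<Psi>secn fi by (simp add: has_bochner_integral_iff)
    show "AE x in lborel. integrable lborel (\<lambda>y. \<Psi> (x, y))"
      using \<Psi>sec by (simp add: has_bochner_integral_iff)
  qed
  have \<Phi>\<Psi>: "\<Phi> (y, s) = \<Psi> (s *\<^sub>R u + y, s)" for y s
    unfolding \<Phi>_def \<Psi>_def using uu by (simp add: inner_add_right algebra_simps)
  have sec_int: "(\<integral>y. \<Phi> (y, s) \<partial>lborel) = (\<integral>z. \<Psi> (z, s) \<partial>lborel)" for s
    unfolding \<Phi>\<Psi> by (rule transl_int) measurable
  have sec_nn: "(\<integral>\<^sup>+y. norm (\<Phi> (y, s)) \<partial>lborel) = (\<integral>\<^sup>+z. norm (\<Psi> (z, s)) \<partial>lborel)" for s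
    unfolding \<Phi>\<Psi> by (rule transl_nn[of "\<lambda>z. ennreal (norm (\<Psi> (z, s)))"]) measurable
  have \<Phi>I: "integrable (lborel \<Otimes>\<^sub>M lborel) \<Phi>"
  proof (rule integrableI_bounded)
    have "(\<integral>\<^sup>+ p. norm (\<Phi> p) \<partial>(lborel \<Otimes>\<^sub>M lborel)) = (\<integral>\<^sup>+s. \<integral>\<^sup>+y. norm (\<Phi> (y, s)) \<partial>lborel \<partial>lborel)"
      by (rule lborel_pair.nn_integral_snd[symmetric]) measurable
    also have "\<dots> = (\<integral>\<^sup>+s. \<integral>\<^sup>+z. norm (\<Psi> (z, s)) \<partial>lborel \<partial>lborel)"
      unfolding sec_nn ..
    also have "\<dots> = (\<integral>\<^sup>+ p. norm (\<Psi> p) \<partial>(lborel \<Otimes>\<^sub>M lborel))"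
      by (rule lborel_pair.nn_integral_snd) measurable
    also have "\<dots> < \<infinity>" using \<Psi>I by (simp add: integrable_iff_bounded)
    finally show "(\<integral>\<^sup>+ p. norm (\<Phi> p) \<partial>(lborel \<Otimes>\<^sub>M lborel)) < \<infinity>" .
  qed measurable
  show "AE y in lborel. integrable lborel (\<lambda>s. f (y + s *\<^sub>R u))"
    using lborel_pair.AE_integrable_fst'[OF \<Phi>I]
  proof eventually_elim
    case (elim y)
    then have "integrable lborel (\<lambda>s. \<rho> (u \<bullet> y) * f (y + s *\<^sub>R u))" unfolding \<Phi>_def by simp
    then show ?case using \<rho>pos[of "u \<bullet> y"] by simp
  qed
  have "(\<integral>y. std_normal_density (u \<bullet> y) * (\<integral>s. f (y + s *\<^sub>R u) \<partial>lborel) \<partial>lborel)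
      = (\<integral>y. (\<integral>s. \<Phi> (y, s) \<partial>lborel) \<partial>lborel)"
    by (rule Bochner_Integration.integral_cong[OF refl]) (simp add: \<Phi>_def \<rho>_def)
  also have "\<dots> = integral\<^sup>L (lborel \<Otimes>\<^sub>M lborel) \<Phi>"
    by (rule lborel_pair.integral_fst'[OF \<Phi>I])
  also have "\<dots> = (\<integral>s. (\<integral>y. \<Phi> (y, s) \<partial>lborel) \<partial>lborel)"
    using lborel_pair.integral_snd[of "\<lambda>y s. \<Phi> (y, s)"] \<Phi>I by simp
  also have "\<dots> = (\<integral>s. (\<integral>z. \<Psi> (z, s) \<partial>lborel) \<partial>lborel)"
    unfolding sec_int ..
  also have "\<dots> = integral\<^sup>L (lborel \<Otimes>\<^sub>M lborel) \<Psi>"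
    using lborel_pair.integral_snd[of "\<lambda>z s. \<Psi> (z, s)"] \<Psi>I by simp
  also have "\<dots> = (\<integral>z. (\<integral>s. \<Psi> (z, s) \<partial>lborel) \<partial>lborel)"
    by (rule lborel_pair.integral_fst'[OF \<Psi>I, symmetric])
  also have "\<dots> = (\<integral>z. f z \<partial>lborel)"
    using \<Psi>sec by (simp add: has_bochner_integral_iff)
  finally show "(\<integral>y. f y \<partial>lborel) = (\<integral>y. std_normal_density (u \<bullet> y) * (\<integral>s. f (y + s *\<^sub>R u) \<partial>lborel) \<partial>lborel)" ..
qed

lemma stein_dir:
  fixes g D \<psi> C :: "'a::euclidean_space \<Rightarrow> real" and u :: 'a
  assumes u: "norm u = 1"
    and dg: "\<And>y s. ((\<lambda>s. g (y + s *\<^sub>R u)) has_real_derivative D (y + s *\<^sub>R u)) (at s)"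
    and Dm[measurable]: "D \<in> borel_measurable borel"
    and gm[measurable]: "g \<in> borel_measurable borel"
    and \<psi>m[measurable]: "\<psi> \<in> borel_measurable borel"
    and \<psi>: "\<And>y s. \<psi> (y + s *\<^sub>R u) = C y * normal_density (-(u \<bullet> y)) 1 s"
    and C: "\<And>y. C y \<noteq> 0"
    and I1: "integrable lborel (\<lambda>x. \<psi> x * D x)"
    and I2: "integrable lborel (\<lambda>x. \<psi> x * ((u \<bullet> x) * g x))"
  shows "(\<integral>x. \<psi> x * ((u \<bullet> x) * g x) \<partial>lborel) = (\<integral>x. \<psi> x * D x \<partial>lborel)"
proof -
  have uu: "u \<bullet> u = 1" using u by (simp add: norm_eq_sqrt_inner)
  note L1 = line_avg[OF I1 u] and L2 = line_avg[OF I2 u]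
  have ae: "AE y in lborel. (\<integral>s. \<psi> (y + s *\<^sub>R u) * ((u \<bullet> (y + s *\<^sub>R u)) * g (y + s *\<^sub>R u)) \<partial>lborel)
      = (\<integral>s. \<psi> (y + s *\<^sub>R u) * D (y + s *\<^sub>R u) \<partial>lborel)"
    using L1(1)
  proof eventually_elim
    case (elim y)
    define a where "a = u \<bullet> y"
    have e1: "(\<lambda>s. \<psi> (y + s *\<^sub>R u) * D (y + s *\<^sub>R u)) = (\<lambda>s. C y * (normal_density (-a) 1 s * D (y + s *\<^sub>R u)))"
      unfolding \<psi> a_def by (simp add: fun_eq_iff)
    have e2: "(\<lambda>s. \<psi> (y + s *\<^sub>R u) * ((u \<bullet> (y + s *\<^sub>R u)) * g (y + s *\<^sub>R u)))
        = (\<lambda>s. C y * ((s - (-a)) * normal_density (-a) 1 s * g (y + s *\<^sub>R u)))"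
      unfolding \<psi> a_def using uu by (simp add: fun_eq_iff inner_add_right algebra_simps)
    have Iy: "integrable lborel (\<lambda>s. normal_density (-a) 1 s * D (y + s *\<^sub>R u))"
      using elim C[of y] unfolding e1 by simp
    have Gm: "(\<lambda>s. D (y + s *\<^sub>R u)) \<in> borel_measurable borel" by measurable
    note S = stein1d[of "\<lambda>s. g (y + s *\<^sub>R u)" "\<lambda>s. D (y + s *\<^sub>R u)", OF dg Gm Iy]
    show ?case unfolding e1 e2 using S(2) by simp
  qed
  have "(\<integral>x. \<psi> x * ((u \<bullet> x) * g x) \<partial>lborel)
      = (\<integral>y. std_normal_density (u \<bullet> y) * (\<integral>s. \<psi> (y + s *\<^sub>R u) * ((u \<bullet> (y + s *\<^sub>R u)) * g (y + s *\<^sub>R u)) \<partial>lborel) \<partial>lborel)"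
    using L2(2) .
  also have "\<dots> = (\<integral>y. std_normal_density (u \<bullet> y) * (\<integral>s. \<psi> (y + s *\<^sub>R u) * D (y + s *\<^sub>R u) \<partial>lborel) \<partial>lborel)"
  proof (rule integral_cong_AE)
    show "AE y in lborel. std_normal_density (u \<bullet> y) * (\<integral>s. \<psi> (y + s *\<^sub>R u) * ((u \<bullet> (y + s *\<^sub>R u)) * g (y + s *\<^sub>R u)) \<partial>lborel)
       = std_normal_density (u \<bullet> y) * (\<integral>s. \<psi> (y + s *\<^sub>R u) * D (y + s *\<^sub>R u) \<partial>lborel)"
      using ae by eventually_elim simp
    show "(\<lambda>y. std_normal_density (u \<bullet> y) * (\<integral>s. \<psi> (y + s *\<^sub>R u) * ((u \<bullet> (y + s *\<^sub>R u)) * g (y + s *\<^sub>R u)) \<partial>lborel)) \<in> borel_measurable lborel"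
      by (intro borel_measurable_times lborel.borel_measurable_lebesgue_integral) measurable
    show "(\<lambda>y. std_normal_density (u \<bullet> y) * (\<integral>s. \<psi> (y + s *\<^sub>R u) * D (y + s *\<^sub>R u) \<partial>lborel)) \<in> borel_measurable lborel"
      by (intro borel_measurable_times lborel.borel_measurable_lebesgue_integral) measurable
  qed
  also have "\<dots> = (\<integral>x. \<psi> x * D x \<partial>lborel)"
    using L1(2) by simp
  finally show ?thesis .
qed

definition psi :: "real ^ 'd::finite \<Rightarrow> real" where
  "psi x = (\<Prod>j\<in>UNIV. std_normal_density (x $ j))"

lemma psi_pos: "0 < psi x"
  unfolding psi_def by (intro prod_pos) (simp add: normal_density_pos)

lemma psi_measurable[measurable]: "psi \<in> borel_measurable borel"
  unfolding psi_def by measurable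

lemma std_gauss_eq: "std_gauss = density lborel (\<lambda>x. ennreal (psi x))"
  unfolding std_gauss_def psi_def
  by (intro arg_cong[where f="density lborel"] ext prod_ennreal) simp

lemma psi_exp: "psi x = exp (- (x \<bullet> x) / 2) / sqrt (2*pi) ^ CARD('d)"
  for x :: "real ^ 'd::finite"
proof -
  have "psi x = (\<Prod>j\<in>UNIV. exp (- ((x $ j)^2) / 2) / sqrt (2*pi))"
    unfolding psi_def by (intro prod.cong refl) (simp add: normal_density_def)
  also have "\<dots> = (\<Prod>j\<in>UNIV. exp (- ((x $ j)^2) / 2)) / sqrt (2*pi) ^ CARD('d)"
    by (simp add: prod_dividef)
  also have "(\<Prod>j\<in>UNIV. exp (- ((x $ j)^2) / 2)) = exp (\<Sum>j\<in>UNIV. - ((x $ j)^2) / 2)"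
    by (simp add: exp_sum)
  also have "(\<Sum>j\<in>UNIV. - ((x $ j)^2) / 2) = - (x \<bullet> x) / 2"
    by (simp add: inner_vec_def power2_eq_square sum_negf sum_divide_distrib)
  finally show ?thesis .
qed

lemma psi_line:
  fixes u y :: "real ^ 'd::finite"
  assumes u: "norm u = 1"
  shows "psi (y + s *\<^sub>R u) = (psi y * exp ((u \<bullet> y)^2 / 2) * sqrt (2*pi)) * normal_density (-(u \<bullet> y)) 1 s"
proof -
  have uu: "u \<bullet> u = 1" using u by (simp add: norm_eq_sqrt_inner)
  have e: "(y + s *\<^sub>R u) \<bullet> (y + s *\<^sub>R u) = y \<bullet> y + 2 * s * (u \<bullet> y) + s^2"
    using uu by (simp add: inner_add_left inner_add_right inner_commute power2_eq_square algebra_simps)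
  have "- ((y + s *\<^sub>R u) \<bullet> (y + s *\<^sub>R u)) / 2 = - (y \<bullet> y) / 2 + (u \<bullet> y)^2 / 2 + (- ((s - - (u \<bullet> y))^2) / 2)"
    unfolding e by (simp add: power2_eq_square field_simps)
  then have "exp (- ((y + s *\<^sub>R u) \<bullet> (y + s *\<^sub>R u)) / 2) = exp (- (y \<bullet> y) / 2) * exp ((u \<bullet> y)^2 / 2) * exp (- ((s - - (u \<bullet> y))^2) / 2)"
    by (simp add: exp_add[symmetric])
  then show ?thesis
    unfolding psi_exp normal_density_def by (simp add: field_simps)
qed

lemma comp_stein:
  fixes G :: "real ^ 'd::finite \<Rightarrow> real ^ 'n::finite" and H :: "real ^ 'd \<Rightarrow> real ^ 'd ^ 'n"
    and u :: "real ^ 'd"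
  assumes mixed: "\<And>x i. ((\<lambda>y. G y $ i) has_derivative (\<lambda>v. H x $ i \<bullet> v)) (at x)"
    and H_int: "integrable std_gauss H"
    and G_int: "integrable std_gauss (\<lambda>x. (u \<bullet> x) *\<^sub>R G x)"
    and unit: "norm u = 1"
  shows "(\<integral>x. (u \<bullet> x) *\<^sub>R G x \<partial>std_gauss) = (\<integral>x. H x \<partial>std_gauss) *v u"
proof -
  have Hm[measurable]: "H \<in> borel_measurable borel"
    using borel_measurable_integrable[OF H_int] by (simp add: std_gauss_eq)
  have Gic: "continuous_on UNIV (\<lambda>y. G y $ i)" for i
    using mixed has_derivative_continuous continuous_at_imp_continuous_on by blast
  have Gim[measurable]: "(\<lambda>y. G y $ i) \<in> borel_measurable borel" for i
    by (rule borel_measurable_continuous_onI[OF Gic])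
  have "continuous_on UNIV (\<lambda>y. \<chi> i. G y $ i)"
    by (intro continuous_on_vec_lambda Gic)
  then have Gm[measurable]: "G \<in> borel_measurable borel"
    by (simp add: borel_measurable_continuous_onI)
  have IH: "integrable lborel (\<lambda>x. psi x *\<^sub>R H x)"
    using H_int unfolding std_gauss_eq
    by (subst (asm) integrable_density) (auto simp: less_imp_le[OF psi_pos])
  have IG: "integrable lborel (\<lambda>x. psi x *\<^sub>R ((u \<bullet> x) *\<^sub>R G x))"
    using G_int unfolding std_gauss_eq
    by (subst (asm) integrable_density) (auto simp: less_imp_le[OF psi_pos])
  have intH: "(\<integral>x. H x \<partial>std_gauss) = (\<integral>x. psi x *\<^sub>R H x \<partial>lborel)"
    unfolding std_gauss_eq by (rule integral_density) (auto simp: less_imp_le[OF psi_pos])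
  have intG: "(\<integral>x. (u \<bullet> x) *\<^sub>R G x \<partial>std_gauss) = (\<integral>x. psi x *\<^sub>R ((u \<bullet> x) *\<^sub>R G x) \<partial>lborel)"
    unfolding std_gauss_eq by (rule integral_density) (auto simp: less_imp_le[OF psi_pos])
  show ?thesis
  proof (subst vec_eq_iff, intro allI)
    fix i
    have blH: "bounded_linear (\<lambda>M::real^'d^'n. M $ i \<bullet> u)"
      by (rule bounded_linear_compose[OF bounded_linear_inner_left bounded_linear_vec_nth])
    have lhs: "(\<integral>x. (u \<bullet> x) *\<^sub>R G x \<partial>std_gauss) $ i = (\<integral>x. psi x * ((u \<bullet> x) * G x $ i) \<partial>lborel)"
      unfolding intG integral_bounded_linear[OF bounded_linear_vec_nth IG, symmetric] by (simp add: mult.assoc)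
    have mv: "(M *v u) $ i = M $ i \<bullet> u" for M :: "real^'d^'n"
      by (simp add: matrix_vector_mult_def inner_vec_def)
    have rhs: "((\<integral>x. H x \<partial>std_gauss) *v u) $ i = (\<integral>x. psi x * (H x $ i \<bullet> u) \<partial>lborel)"
      unfolding mv intH integral_bounded_linear[OF blH IH, symmetric] by simp
    have I1: "integrable lborel (\<lambda>x. psi x * (H x $ i \<bullet> u))"
      using integrable_bounded_linear[OF blH IH] by simp
    have I2: "integrable lborel (\<lambda>x. psi x * ((u \<bullet> x) * G x $ i))"
      using integrable_bounded_linear[OF bounded_linear_vec_nth IG, of i] by (simp add: mult.assoc)
    have dg: "((\<lambda>s. G (y + s *\<^sub>R u) $ i) has_real_derivative (H (y + s *\<^sub>R u) $ i \<bullet> u)) (at s)" for y s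
    proof -
      have l: "((\<lambda>s. y + s *\<^sub>R u) has_derivative (\<lambda>h. h *\<^sub>R u)) (at s)"
        by (auto intro!: derivative_eq_intros)
      have "(((\<lambda>z. G z $ i) \<circ> (\<lambda>s. y + s *\<^sub>R u)) has_derivative ((\<lambda>v. H (y + s *\<^sub>R u) $ i \<bullet> v) \<circ> (\<lambda>h. h *\<^sub>R u))) (at s)"
        by (rule diff_chain_at[OF l mixed])
      then have "((\<lambda>s. G (y + s *\<^sub>R u) $ i) has_derivative (\<lambda>h. H (y + s *\<^sub>R u) $ i \<bullet> (h *\<^sub>R u))) (at s)"
        by (simp add: o_def)
      then show ?thesis
        unfolding has_field_derivative_def by (rule has_derivative_eq_rhs) (simp add: fun_eq_iff mult.commute)
    qed
    have Dm: "(\<lambda>x. H x $ i \<bullet> u) \<in> borel_measurable borel"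
      using measurable_compose[OF Hm borel_measurable_continuous_onI[OF linear_continuous_on[OF blH]]] by simp
    have "(\<integral>x. psi x * ((u \<bullet> x) * G x $ i) \<partial>lborel) = (\<integral>x. psi x * (H x $ i \<bullet> u) \<partial>lborel)"
    proof -
      have C: "psi y * exp ((u \<bullet> y)\<^sup>2 / 2) * sqrt (2 * pi) \<noteq> 0" for y :: "real^'d"
      proof -
        have "psi y \<noteq> 0" using psi_pos[of y] by linarith
        then show ?thesis by simp
      qed
      show ?thesis
        by (rule stein_dir[OF unit dg Dm Gim psi_measurable psi_line[OF unit] C I1 I2])
    qed
    then show "(\<integral>x. (u \<bullet> x) *\<^sub>R G x \<partial>std_gauss) $ i = ((\<integral>x. H x \<partial>std_gauss) *v u) $ i"
      unfolding lhs rhs .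
  qed
qed

lemma sf_std_gauss: "sigma_finite_measure (std_gauss :: (real ^ 'd::finite) measure)"
  unfolding std_gauss_eq
  by (subst sigma_finite_measure.sigma_finite_iff_density_finite[OF sigma_finite_lborel]) auto

lemma prod_int:
  fixes f :: "'a \<Rightarrow> real"
  assumes "pair_sigma_finite M M" and fi: "integrable M f"
  shows "integrable (M \<Otimes>\<^sub>M M) (\<lambda>p. f (fst p) * f (snd p))"
    and "(\<integral>p. f (fst p) * f (snd p) \<partial>(M \<Otimes>\<^sub>M M)) = (integral\<^sup>L M f)^2"
proof -
  interpret pair_sigma_finite M M by fact
  have fm[measurable]: "f \<in> borel_measurable M" using fi by simp
  have ai: "integrable M (\<lambda>x. \<bar>f x\<bar>)" using fi by simp
  show I: "integrable (M \<Otimes>\<^sub>M M) (\<lambda>p. f (fst p) * f (snd p))"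
  proof (rule Fubini_integrable)
    show "(\<lambda>p. f (fst p) * f (snd p)) \<in> borel_measurable (M \<Otimes>\<^sub>M M)" by measurable
    have "(\<lambda>x. \<integral>y. norm (f (fst (x, y)) * f (snd (x, y))) \<partial>M) = (\<lambda>x. \<bar>f x\<bar> * (\<integral>y. \<bar>f y\<bar> \<partial>M))"
      by (simp add: abs_mult)
    then show "integrable M (\<lambda>x. \<integral>y. norm (f (fst (x, y)) * f (snd (x, y))) \<partial>M)"
      using ai by simp
    show "AE x in M. integrable M (\<lambda>y. f (fst (x, y)) * f (snd (x, y)))"
      using fi by simp
  qed
  have "(\<integral>p. f (fst p) * f (snd p) \<partial>(M \<Otimes>\<^sub>M M)) = (\<integral>x. \<integral>y. f (fst (x, y)) * f (snd (x, y)) \<partial>M \<partial>M)"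
    by (rule integral_fst'[OF I, symmetric])
  also have "\<dots> = (\<integral>x. f x * integral\<^sup>L M f \<partial>M)" by simp
  also have "\<dots> = (integral\<^sup>L M f)^2" by (simp add: power2_eq_square)
  finally show "(\<integral>p. f (fst p) * f (snd p) \<partial>(M \<Otimes>\<^sub>M M)) = (integral\<^sup>L M f)^2" .
qed

theorem theorem1:
  fixes f :: "real ^ 'n::finite \<Rightarrow> real ^ 'd::finite \<Rightarrow> real"
    and \<theta>0 :: "real ^ 'n"
    and G :: "real ^ 'd \<Rightarrow> real ^ 'n"
    and H :: "real ^ 'd \<Rightarrow> real ^ 'd ^ 'n"
    and u :: "real ^ 'd"
  assumes grad_theta: "\<And>x. ((\<lambda>\<theta>. f \<theta> x) has_derivative (\<lambda>h. G x \<bullet> h)) (at \<theta>0)"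
    and mixed: "\<And>x i. ((\<lambda>y. G y $ i) has_derivative (\<lambda>v. H x $ i \<bullet> v)) (at x)"
    and H_int: "integrable std_gauss H"
    and G_int: "integrable std_gauss (\<lambda>x. (u \<bullet> x) *\<^sub>R G x)"
    and unit: "norm u = 1"
  shows "alignment (ntk G) (\<lambda>x. u \<bullet> x) = (norm ((\<integral>x. H x \<partial>std_gauss) *v u))\<^sup>2"
proof -
  define E where "E = (\<integral>x. (u \<bullet> x) *\<^sub>R G x \<partial>std_gauss)"
  have E: "E = (\<integral>x. H x \<partial>std_gauss) *v u"
    unfolding E_def by (rule comp_stein[OF mixed H_int G_int unit])
  interpret S: sigma_finite_measure "std_gauss :: (real ^ 'd) measure" by (rule sf_std_gauss)
  interpret P: pair_sigma_finite "std_gauss :: (real ^ 'd) measure" "std_gauss :: (real ^ 'd) measure" ..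
  define F where "F i x = (u \<bullet> x) * G x $ i" for i x
  have Fi: "integrable std_gauss (F i)" for i
    using integrable_bounded_linear[OF bounded_linear_vec_nth G_int, of i] unfolding F_def by simp
  have FE: "integral\<^sup>L std_gauss (F i) = E $ i" for i
    unfolding E_def F_def integral_bounded_linear[OF bounded_linear_vec_nth G_int, symmetric] by simp
  note PI = prod_int[OF P.pair_sigma_finite_axioms Fi]
  have "alignment (ntk G) (\<lambda>x. u \<bullet> x)
      = (\<integral>p. (\<Sum>i\<in>UNIV. F i (fst p) * F i (snd p)) \<partial>(std_gauss \<Otimes>\<^sub>M std_gauss))"
  proof -
    have pw: "(u \<bullet> a) * (G a \<bullet> G b) * (u \<bullet> b) = (\<Sum>i\<in>UNIV. F i a * F i b)" for a b
      unfolding inner_vec_def[of "G a" "G b"] F_def sum_distrib_left sum_distrib_right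
      by (simp add: ac_simps)
    show ?thesis
      unfolding alignment_def ntk_def pw ..
  qed
  also have "\<dots> = (\<Sum>i\<in>UNIV. (\<integral>p. F i (fst p) * F i (snd p) \<partial>(std_gauss \<Otimes>\<^sub>M std_gauss)))"
    by (rule Bochner_Integration.integral_sum) (use PI(1) in auto)
  also have "\<dots> = (\<Sum>i\<in>UNIV. (E $ i)^2)"
    using PI(2) FE by simp
  also have "\<dots> = (norm E)^2"
    unfolding power2_norm_eq_inner inner_vec_def by (simp add: power2_eq_square)
  finally show ?thesis unfolding E .
qed

end
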